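(* $\mathcal{VMU} \subsetneq \mathcal{LEAN} \setminus \{\top\}$.
   Context: Literals come with a fixed-point-free involution $x \mapsto \overline{x}$; variables are positive literals. A clause is a finite set $C$ of literals with $C \cap \overline{C} = \emptyset$; a clause-set is a finite set of clauses; $\top$ is the empty clause-set. $\mathrm{var}(F)$ is the set of variables of $F$. A partial assignment is a map $\varphi : V \to \{0,1\}$ on a finite set $V = \mathrm{var}(\varphi)$ of variables, $\varphi(\overline{v}) = 1 - \varphi(v)$; $F$ is satisfiable iff some partial assignment makes some literal of every clause true. An autarky for $F$ is a partial assignment $\varphi$ such that every clause of $F$ containing a literal falsified by $\varphi$ also contains a literal satisfied by $\varphi$. $\mathcal{LEAN}$ is the class of clause-sets $F$ with no autarky $\varphi$ such that $\mathrm{var}(\varphi) \cap \mathrm{var}(F) \ne \emptyset$. $\mathcal{VMU}$ is the class of unsatisfiable clause-sets $F$ such that every unsatisfiable $F' \subseteq F$ has $\mathrm{var}(F') = \mathrm{var}(F)$. *)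

theory Defs
  imports Main
begin

text \<open>Literals over variables of type 'v: positive literals are the variables,
  the involution is complementation (fixed-point free).\<close>
datatype 'v lit = Pos 'v | Neg 'v

fun compl :: "'v lit \<Rightarrow> 'v lit" where
  "compl (Pos v) = Neg v"
| "compl (Neg v) = Pos v"

fun var_lit :: "'v lit \<Rightarrow> 'v" where
  "var_lit (Pos v) = v"
| "var_lit (Neg v) = v"

type_synonym 'v clause = "'v lit set"
type_synonym 'v cls = "'v clause set"

definition is_clause :: "'v clause \<Rightarrow> bool" where
  "is_clause C \<longleftrightarrow> finite C \<and> C \<inter> compl ` C = {}"

definition is_clause_set :: "'v cls \<Rightarrow> bool" where
  "is_clause_set F \<longleftrightarrow> finite F \<and> (\<forall>C\<in>F. is_clause C)"

definition vars :: "'v cls \<Rightarrow> 'v set" where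
  "vars F = (\<Union>C\<in>F. var_lit ` C)"

text \<open>Partial assignments: partial maps with finite domain (true = 1, false = 0).\<close>
definition is_pa :: "('v \<rightharpoonup> bool) \<Rightarrow> bool" where
  "is_pa \<phi> \<longleftrightarrow> finite (dom \<phi>)"

fun lit_val :: "('v \<rightharpoonup> bool) \<Rightarrow> 'v lit \<Rightarrow> bool option" where
  "lit_val \<phi> (Pos v) = \<phi> v"
| "lit_val \<phi> (Neg v) = map_option Not (\<phi> v)"

definition sat_lit :: "('v \<rightharpoonup> bool) \<Rightarrow> 'v lit \<Rightarrow> bool" where
  "sat_lit \<phi> x \<longleftrightarrow> lit_val \<phi> x = Some True"

definition fals_lit :: "('v \<rightharpoonup> bool) \<Rightarrow> 'v lit \<Rightarrow> bool" where
  "fals_lit \<phi> x \<longleftrightarrow> lit_val \<phi> x = Some False"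

definition satisfiable :: "'v cls \<Rightarrow> bool" where
  "satisfiable F \<longleftrightarrow> (\<exists>\<phi>. is_pa \<phi> \<and> (\<forall>C\<in>F. \<exists>x\<in>C. sat_lit \<phi> x))"

definition autarky :: "('v \<rightharpoonup> bool) \<Rightarrow> 'v cls \<Rightarrow> bool" where
  "autarky \<phi> F \<longleftrightarrow> is_pa \<phi> \<and>
     (\<forall>C\<in>F. (\<exists>x\<in>C. fals_lit \<phi> x) \<longrightarrow> (\<exists>x\<in>C. sat_lit \<phi> x))"

definition LEAN :: "'v cls set" where
  "LEAN = {F. is_clause_set F \<and> \<not> (\<exists>\<phi>. autarky \<phi> F \<and> dom \<phi> \<inter> vars F \<noteq> {})}"

definition VMU :: "'v cls set" where
  "VMU = {F. is_clause_set F \<and> \<not> satisfiable F \<and>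
            (\<forall>F'\<subseteq>F. \<not> satisfiable F' \<longrightarrow> vars F' = vars F)}"

end

theory Submission
  imports Defs
begin

lemma sat_lit_agree: "lit_val \<phi> x = lit_val \<psi> x \<Longrightarrow> sat_lit \<phi> x = sat_lit \<psi> x"
  by (simp add: sat_lit_def)

lemma lit_val_add_in: "var_lit x \<in> dom \<phi> \<Longrightarrow> lit_val (\<psi> ++ \<phi>) x = lit_val \<phi> x"
  by (cases x) (auto simp: map_add_def split: option.splits)

lemma lit_val_add_out: "var_lit x \<notin> dom \<phi> \<Longrightarrow> lit_val (\<psi> ++ \<phi>) x = lit_val \<psi> x"
  by (cases x) (auto simp: map_add_def split: option.splits)

lemma lit_val_dom: "var_lit x \<in> dom \<phi> \<Longrightarrow> sat_lit \<phi> x \<or> fals_lit \<phi> x"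
  by (cases x) (auto simp: sat_lit_def fals_lit_def)

lemma VMU_lean:
  assumes F: "F \<in> VMU" shows "F \<in> LEAN - {{}}"
proof -
  from F have cs: "is_clause_set F" and uns: "\<not> satisfiable F"
    and mu: "\<And>F'. F' \<subseteq> F \<Longrightarrow> \<not> satisfiable F' \<Longrightarrow> vars F' = vars F"
    unfolding VMU_def by blast+
  have ne: "F \<noteq> {}"
  proof
    assume "F = {}"
    hence "satisfiable F" unfolding satisfiable_def is_pa_def by (intro exI[of _ Map.empty]) simp
    thus False using uns by simp
  qed
  have "\<not> (\<exists>\<phi>. autarky \<phi> F \<and> dom \<phi> \<inter> vars F \<noteq> {})"
  proof
    assume "\<exists>\<phi>. autarky \<phi> F \<and> dom \<phi> \<inter> vars F \<noteq> {}"
    then obtain \<phi> where au: "autarky \<phi> F" and tch: "dom \<phi> \<inter> vars F \<noteq> {}" by blast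
    define F' where "F' = {C\<in>F. \<forall>x\<in>C. var_lit x \<notin> dom \<phi>}"
    have "\<not> satisfiable F'"
    proof
      assume "satisfiable F'"
      then obtain \<psi> where pa: "is_pa \<psi>" and s: "\<forall>C\<in>F'. \<exists>x\<in>C. sat_lit \<psi> x"
        unfolding satisfiable_def by blast
      have "is_pa (\<psi> ++ \<phi>)" using pa au by (auto simp: is_pa_def autarky_def)
      moreover have "\<forall>C\<in>F. \<exists>x\<in>C. sat_lit (\<psi> ++ \<phi>) x"
      proof
        fix C assume C: "C \<in> F"
        show "\<exists>x\<in>C. sat_lit (\<psi> ++ \<phi>) x"
        proof (cases "C \<in> F'")
          case True
          then obtain x where "x \<in> C" "sat_lit \<psi> x" using s by blast
          moreover have "var_lit x \<notin> dom \<phi>" using True \<open>x \<in> C\<close> by (auto simp: F'_def)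
          ultimately show ?thesis using lit_val_add_out[of x \<phi> \<psi>] by (auto simp: sat_lit_def)
        next
          case False
          then obtain x where x: "x \<in> C" "var_lit x \<in> dom \<phi>" using C by (auto simp: F'_def)
          have "\<exists>y\<in>C. sat_lit \<phi> y"
            using lit_val_dom[OF x(2)] x(1) au C by (auto simp: autarky_def)
          then obtain y where y: "y \<in> C" "sat_lit \<phi> y" by blast
          hence "var_lit y \<in> dom \<phi>" by (cases y) (auto simp: sat_lit_def)
          thus ?thesis using y lit_val_add_in[of y \<phi> \<psi>] by (auto simp: sat_lit_def)
        qed
      qed
      ultimately show False using uns unfolding satisfiable_def by blast
    qed
    moreover have "F' \<subseteq> F" by (auto simp: F'_def)
    ultimately have "vars F' = vars F" using mu by blast
    moreover have "dom \<phi> \<inter> vars F' = {}" by (auto simp: F'_def vars_def)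
    ultimately show False using tch by simp
  qed
  thus ?thesis using cs ne by (auto simp: LEAN_def)
qed

theorem lemma4p3:
  assumes "infinite (UNIV :: 'v set)"
  shows "(VMU :: 'v cls set) \<subset> LEAN - {{}}"
proof -
  obtain a :: 'v where True by blast
  obtain b :: 'v where ab: "b \<noteq> a"
    proof -
    have "UNIV \<noteq> {a}" using assms by (metis finite.emptyI finite.insertI)
    thus ?thesis using that by blast
  qed
  define F :: "'v cls" where "F = {{Pos a},{Neg a},{Pos b},{Neg b}}"
  have cs: "is_clause_set F" by (auto simp: F_def is_clause_set_def is_clause_def)
  have vF: "vars F = {a,b}" by (auto simp: F_def vars_def)
  have lean: "F \<in> LEAN"
  proof -
    have "\<not> autarky \<phi> F" if "v \<in> dom \<phi>" "v \<in> {a,b}" for \<phi> v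
    proof
      assume au: "autarky \<phi> F"
      from that obtain t where t: "\<phi> v = Some t" by auto
      have "{Pos v} \<in> F" "{Neg v} \<in> F" using that(2) by (auto simp: F_def)
      thus False using au t
        by (cases t) (auto simp: autarky_def sat_lit_def fals_lit_def)
    qed
    thus ?thesis using cs vF by (auto simp: LEAN_def)
  qed
  have notV: "F \<notin> VMU"
  proof
    assume "F \<in> VMU"
    moreover have "\<not> satisfiable {{Pos a},{Neg a}}"
      by (auto simp: satisfiable_def sat_lit_def)
    moreover have "{{Pos a},{Neg a}} \<subseteq> F" by (auto simp: F_def)
    moreover have "vars {{Pos a},{Neg a}} = {a}" by (auto simp: vars_def)
    ultimately show False using vF ab by (auto simp: VMU_def)
  qed
  have "F \<noteq> {}" by (simp add: F_def)
  hence "F \<in> LEAN - {{}}" using lean by simp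
  moreover have "(VMU :: 'v cls set) \<subseteq> LEAN - {{}}" using VMU_lean by (rule subsetI)
  moreover have "(VMU :: 'v cls set) \<noteq> LEAN - {{}}" using notV \<open>F \<in> LEAN - {{}}\<close> by metis
  ultimately show ?thesis by (simp add: psubset_eq)
qed

end
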